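(* Let $\mathbf{a}_1,\ldots,\mathbf{a}_m\in\mathbb{C}^d$ be i.i.d. complex Gaussian random vectors. There are universal constants $C,c>0$ such that if $m\ge Cd$, then with probability at least $1-3\exp(-cm)$, \[ \frac1m\sum_{j=1}^m\Big||\mathbf{a}_j^*\mathbf{z}+b_j|^2-|\mathbf{a}_j^*\mathbf{w}+b_j|^2\Big|\le\frac32\Big(\|\mathbf{z}\|_2+\|\mathbf{w}\|_2+\frac{2\|\mathbf{b}\|_2}{\sqrt m}\Big)\|\mathbf{z}-\mathbf{w}\|_2 \] for all $\mathbf{z},\mathbf{w}\in\mathbb{C}^d$ and all $\mathbf{b}=(b_1,\ldots,b_m)^\top\in\mathbb{C}^m$.
   Context: A complex Gaussian random vector $\mathbf{a}\in\mathbb{C}^d$ means $\mathbf{a}\sim\frac{1}{\sqrt2}\mathcal{N}(0,I_d)+\frac{i}{\sqrt2}\mathcal{N}(0,I_d)$. *)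

theory Defs
  imports "HOL-Probability.Probability"
begin

definition std_gauss :: "real measure" where
  "std_gauss = density lborel std_normal_density"

definition complex_gauss :: "complex measure" where
  "complex_gauss = distr (std_gauss \<Otimes>\<^sub>M std_gauss) borel
     (\<lambda>(x, y). Complex (x / sqrt 2) (y / sqrt 2))"

definition complex_gauss_vec :: "nat \<Rightarrow> (nat \<Rightarrow> complex) measure" where
  "complex_gauss_vec d = PiM {..<d} (\<lambda>_. complex_gauss)"

definition gauss_sample :: "nat \<Rightarrow> nat \<Rightarrow> (nat \<Rightarrow> nat \<Rightarrow> complex) measure" where
  "gauss_sample m d = PiM {..<m} (\<lambda>_. complex_gauss_vec d)"

definition cinner :: "nat \<Rightarrow> (nat \<Rightarrow> complex) \<Rightarrow> (nat \<Rightarrow> complex) \<Rightarrow> complex" where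
  "cinner d a z = (\<Sum>k<d. cnj (a k) * z k)"

definition cnorm2 :: "nat \<Rightarrow> (nat \<Rightarrow> complex) \<Rightarrow> real" where
  "cnorm2 n z = sqrt (\<Sum>k<n. (cmod (z k))\<^sup>2)"

end

theory Submission
  imports Defs
begin

lemma ennreal_normal_nn: assumes "0 < \<sigma>" shows "(\<integral>\<^sup>+x. ennreal (normal_density \<mu> \<sigma> x) \<partial>lborel) = 1"
  using assms by (subst nn_integral_eq_integral) auto

lemma gauss_mgf: "(\<integral>\<^sup>+x. ennreal (exp (t * x)) \<partial>std_gauss) = ennreal (exp (t\<^sup>2/2))"
proof -
  have eq: "std_normal_density x * exp (t * x) = exp (t\<^sup>2/2) * normal_density t 1 x" for x
  proof -
    have "- x\<^sup>2 / 2 + t*x = t\<^sup>2/2 + (-(x - t)\<^sup>2 / 2)" by (simp add: power2_eq_square field_simps)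
    then show ?thesis unfolding std_normal_density_def normal_density_def
      by (simp add: exp_add[symmetric])
  qed
  have "(\<integral>\<^sup>+x. ennreal (exp (t * x)) \<partial>std_gauss) = (\<integral>\<^sup>+x. ennreal (std_normal_density x) * ennreal (exp (t * x)) \<partial>lborel)"
    unfolding std_gauss_def by (subst nn_integral_density) auto
  also have "\<dots> = (\<integral>\<^sup>+x. ennreal (exp (t\<^sup>2/2)) * ennreal (normal_density t 1 x) \<partial>lborel)"
    by (intro nn_integral_cong) (simp add: ennreal_mult'[symmetric] eq less_imp_le)
  also have "\<dots> = ennreal (exp (t\<^sup>2/2))"
    by (subst nn_integral_cmult) (auto simp: ennreal_normal_nn)
  finally show ?thesis .
qed

lemma gauss_sq_mgf: assumes "r < 1/2"
  shows "(\<integral>\<^sup>+x. ennreal (exp (r * x\<^sup>2)) \<partial>std_gauss) = ennreal (1 / sqrt (1 - 2*r))"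
proof -
  define \<sigma> where "\<sigma> = 1 / sqrt (1 - 2*r)"
  have pos: "0 < 1 - 2*r" using assms by simp
  have sp: "\<sigma> > 0" using pos by (simp add: \<sigma>_def)
  have s2: "\<sigma>\<^sup>2 = 1 / (1 - 2*r)" using pos by (simp add: \<sigma>_def power_divide)
  have eq: "std_normal_density x * exp (r * x\<^sup>2) = \<sigma> * normal_density 0 \<sigma> x" for x
  proof -
    have "- x\<^sup>2 / 2 + r * x\<^sup>2 = -(x - 0)\<^sup>2 / (2 * \<sigma>\<^sup>2)" using pos by (simp add: s2 field_simps)
    moreover have "1 / sqrt (2*pi) = \<sigma> * (1 / sqrt (2 * pi * \<sigma>\<^sup>2))"
      using sp by (simp add: real_sqrt_mult)
    ultimately show ?thesis unfolding std_normal_density_def normal_density_def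
      by (simp add: exp_add[symmetric])
  qed
  have "(\<integral>\<^sup>+x. ennreal (exp (r * x\<^sup>2)) \<partial>std_gauss) = (\<integral>\<^sup>+x. ennreal (std_normal_density x) * ennreal (exp (r * x\<^sup>2)) \<partial>lborel)"
    unfolding std_gauss_def by (subst nn_integral_density) auto
  also have "\<dots> = (\<integral>\<^sup>+x. ennreal \<sigma> * ennreal (normal_density 0 \<sigma> x) \<partial>lborel)"
    using sp by (intro nn_integral_cong) (simp add: ennreal_mult[symmetric] eq)
  also have "\<dots> = ennreal \<sigma>"
    by (subst nn_integral_cmult) (auto simp: ennreal_normal_nn sp)
  finally show ?thesis by (simp add: \<sigma>_def)
qed


lemma prob_std_gauss: "prob_space std_gauss"
  unfolding std_gauss_def by (rule prob_space_normal_density) simp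

lemma sets_std_gauss[measurable_cong, simp]: "sets std_gauss = sets borel"
  unfolding std_gauss_def by simp

lemma pair_prod_nn:
  assumes N: "sigma_finite_measure N" and [measurable]: "f \<in> borel_measurable M" "g \<in> borel_measurable N"
  shows "(\<integral>\<^sup>+z. f (fst z) * g (snd z) \<partial>(M \<Otimes>\<^sub>M N)) = (\<integral>\<^sup>+x. f x \<partial>M) * (\<integral>\<^sup>+y. g y \<partial>N)"
proof -
  interpret N: sigma_finite_measure N by (rule N)
  have "(\<integral>\<^sup>+z. f (fst z) * g (snd z) \<partial>(M \<Otimes>\<^sub>M N)) = (\<integral>\<^sup>+x. \<integral>\<^sup>+y. f x * g y \<partial>N \<partial>M)"
    by (subst N.nn_integral_fst[symmetric]) auto
  also have "\<dots> = (\<integral>\<^sup>+x. f x * (\<integral>\<^sup>+y. g y \<partial>N) \<partial>M)"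
    by (simp add: nn_integral_cmult)
  also have "\<dots> = (\<integral>\<^sup>+x. f x \<partial>M) * (\<integral>\<^sup>+y. g y \<partial>N)"
    by (simp add: nn_integral_multc)
  finally show ?thesis .
qed

lemma cg_meas[measurable]: "(\<lambda>(x, y). Complex (x / sqrt 2) (y / sqrt 2)) \<in> borel_measurable (std_gauss \<Otimes>\<^sub>M std_gauss)"
proof -
  have e: "(\<lambda>(x::real, y::real). Complex (x / sqrt 2) (y / sqrt 2)) = (\<lambda>z. complex_of_real (fst z / sqrt 2) + \<i> * complex_of_real (snd z / sqrt 2))"
    by (auto simp: Complex_eq)
  have "(\<lambda>(x::real, y::real). Complex (x / sqrt 2) (y / sqrt 2)) \<in> borel_measurable (borel \<Otimes>\<^sub>M borel)"
    unfolding e by measurable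
  then show ?thesis by (simp cong: measurable_cong_sets)
qed

lemma complex_gauss_nn:
  assumes [measurable]: "h \<in> borel_measurable (borel :: complex measure)"
  shows "(\<integral>\<^sup>+\<xi>. h \<xi> \<partial>complex_gauss) = (\<integral>\<^sup>+z. h (Complex (fst z / sqrt 2) (snd z / sqrt 2)) \<partial>(std_gauss \<Otimes>\<^sub>M std_gauss))"
  unfolding complex_gauss_def by (subst nn_integral_distr) (auto simp: case_prod_beta)

lemma prob_complex_gauss: "prob_space complex_gauss"
  unfolding complex_gauss_def
  by (intro prob_space.prob_space_distr cg_meas prob_space_pair prob_std_gauss)

lemma sets_complex_gauss[measurable_cong, simp]: "sets complex_gauss = sets borel"
  unfolding complex_gauss_def by simp

lemma cnj_meas[measurable]: "cnj \<in> borel_measurable borel"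
  by (intro borel_measurable_continuous_onI continuous_intros)

lemma cgauss_mgf: "(\<integral>\<^sup>+\<xi>. ennreal (exp (Re (cnj \<xi> * w))) \<partial>complex_gauss) = ennreal (exp ((cmod w)\<^sup>2 / 4))"
proof -
  have eq: "ennreal (exp (Re (cnj (Complex (x / sqrt 2) (y / sqrt 2)) * w))) =
        ennreal (exp ((Re w / sqrt 2) * x)) * ennreal (exp ((Im w / sqrt 2) * y))" for x y
    by (simp add: ennreal_mult[symmetric] exp_add[symmetric] algebra_simps)
  have "(\<integral>\<^sup>+\<xi>. ennreal (exp (Re (cnj \<xi> * w))) \<partial>complex_gauss) =
     (\<integral>\<^sup>+z. ennreal (exp ((Re w / sqrt 2) * fst z)) * ennreal (exp ((Im w / sqrt 2) * snd z)) \<partial>(std_gauss \<Otimes>\<^sub>M std_gauss))"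
    apply (subst complex_gauss_nn, measurable)
    apply (rule nn_integral_cong) using eq by simp
  also have "\<dots> = ennreal (exp ((Re w / sqrt 2)\<^sup>2/2)) * ennreal (exp ((Im w / sqrt 2)\<^sup>2/2))"
    using gauss_mgf[of "Re w / sqrt 2"] gauss_mgf[of "Im w / sqrt 2"]
    by (subst pair_prod_nn) (auto simp: prob_std_gauss prob_space_imp_sigma_finite)
  also have "\<dots> = ennreal (exp ((cmod w)\<^sup>2 / 4))"
    by (simp add: ennreal_mult[symmetric] exp_add[symmetric] cmod_power2 power_divide add_divide_distrib)
  finally show ?thesis .
qed

lemma cgauss_sq_mgf: assumes "l < 1"
  shows "(\<integral>\<^sup>+\<xi>. ennreal (exp (l * (cmod \<xi>)\<^sup>2)) \<partial>complex_gauss) = ennreal (1 / (1 - l))"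
proof -
  have eq: "ennreal (exp (l * (cmod (Complex (x / sqrt 2) (y / sqrt 2)))\<^sup>2)) =
        ennreal (exp ((l/2) * x\<^sup>2)) * ennreal (exp ((l/2) * y\<^sup>2))" for x y
    by (simp add: ennreal_mult[symmetric] exp_add[symmetric] cmod_power2 power_divide algebra_simps)
  have g2: "(\<integral>\<^sup>+x. ennreal (exp (l * x\<^sup>2 / 2)) \<partial>std_gauss) = ennreal (1 / sqrt (1 - l))"
    using gauss_sq_mgf[of "l/2"] assms by simp
  have "(\<integral>\<^sup>+\<xi>. ennreal (exp (l * (cmod \<xi>)\<^sup>2)) \<partial>complex_gauss) =
     (\<integral>\<^sup>+z. ennreal (exp ((l/2) * (fst z)\<^sup>2)) * ennreal (exp ((l/2) * (snd z)\<^sup>2)) \<partial>(std_gauss \<Otimes>\<^sub>M std_gauss))"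
    apply (subst complex_gauss_nn, measurable)
    apply (rule nn_integral_cong) using eq by simp
  also have "\<dots> = ennreal (1 / sqrt (1 - 2*(l/2))) * ennreal (1 / sqrt (1 - 2*(l/2)))"
    using assms by (subst pair_prod_nn) (auto simp: g2 prob_std_gauss prob_space_imp_sigma_finite)
  also have "\<dots> = ennreal (1 / (1 - l))"
    using assms by (simp add: ennreal_mult[symmetric])
  finally show ?thesis .
qed


lemma prob_cgv: "prob_space (complex_gauss_vec d)"
  unfolding complex_gauss_vec_def by (intro prob_space_PiM prob_complex_gauss)

lemma prob_gs: "prob_space (gauss_sample m d)"
  unfolding gauss_sample_def by (intro prob_space_PiM prob_cgv)

lemma cinner_meas[measurable]: "(\<lambda>a. cinner d a y) \<in> borel_measurable (complex_gauss_vec d)"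
  unfolding cinner_def complex_gauss_vec_def by measurable

lemma cgv_mgf: "(\<integral>\<^sup>+a. ennreal (exp (Re (\<Sum>k<d. cnj (a k) * u k))) \<partial>complex_gauss_vec d)
   = ennreal (exp ((\<Sum>k<d. (cmod (u k))\<^sup>2) / 4))"
proof -
  interpret product_sigma_finite "\<lambda>_. complex_gauss"
    unfolding product_sigma_finite_def using prob_complex_gauss prob_space_imp_sigma_finite by blast
  have "(\<integral>\<^sup>+a. ennreal (exp (Re (\<Sum>k<d. cnj (a k) * u k))) \<partial>complex_gauss_vec d)
     = (\<integral>\<^sup>+a. (\<Prod>k<d. (\<lambda>k \<xi>. ennreal (exp (Re (cnj \<xi> * u k)))) k (a k)) \<partial>complex_gauss_vec d)"
    by (intro nn_integral_cong) (simp add: exp_sum prod_ennreal)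
  also have "\<dots> = (\<Prod>k<d. ennreal (exp ((cmod (u k))\<^sup>2 / 4)))"
    unfolding complex_gauss_vec_def
    apply (subst product_nn_integral_prod)
      prefer 3 apply (simp only: cgauss_mgf)
     apply auto
    done
  also have "\<dots> = ennreal (exp ((\<Sum>k<d. (cmod (u k))\<^sup>2) / 4))"
    by (simp add: prod_ennreal exp_sum[symmetric] sum_divide_distrib)
  finally show ?thesis .
qed

lemma cgv_sq_mgf: assumes l: "0 \<le> l" "l * (cnorm2 d y)\<^sup>2 < 1"
  shows "(\<integral>\<^sup>+a. ennreal (exp (l * (cmod (cinner d a y))\<^sup>2)) \<partial>complex_gauss_vec d)
     = ennreal (1 / (1 - l * (cnorm2 d y)\<^sup>2))"
proof -
  interpret pair_sigma_finite "complex_gauss_vec d" complex_gauss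
    by (intro pair_sigma_finite.intro prob_space_imp_sigma_finite prob_cgv prob_complex_gauss)
  have nn: "(cnorm2 d y)\<^sup>2 = (\<Sum>k<d. (cmod (y k))\<^sup>2)"
    unfolding cnorm2_def by (simp add: sum_nonneg)
  have "(\<integral>\<^sup>+a. ennreal (exp (l * (cmod (cinner d a y))\<^sup>2)) \<partial>complex_gauss_vec d)
     = (\<integral>\<^sup>+a. \<integral>\<^sup>+\<xi>. ennreal (exp (Re (cnj \<xi> * (2 * sqrt l * cinner d a y)))) \<partial>complex_gauss \<partial>complex_gauss_vec d)"
  proof (intro nn_integral_cong)
    fix a
    have "(cmod (2 * sqrt l * cinner d a y))\<^sup>2 / 4 = l * (cmod (cinner d a y))\<^sup>2"
      using l by (simp add: norm_mult power_mult_distrib)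
    then show "ennreal (exp (l * (cmod (cinner d a y))\<^sup>2)) = (\<integral>\<^sup>+\<xi>. ennreal (exp (Re (cnj \<xi> * (2 * sqrt l * cinner d a y)))) \<partial>complex_gauss)"
      unfolding cgauss_mgf by simp
  qed
  also have "\<dots> = (\<integral>\<^sup>+\<xi>. \<integral>\<^sup>+a. ennreal (exp (Re (cnj \<xi> * (2 * sqrt l * cinner d a y)))) \<partial>complex_gauss_vec d \<partial>complex_gauss)"
    by (rule Fubini'[symmetric]) measurable
  also have "\<dots> = (\<integral>\<^sup>+\<xi>. ennreal (exp ((l * (cnorm2 d y)\<^sup>2) * (cmod \<xi>)\<^sup>2)) \<partial>complex_gauss)"
  proof (intro nn_integral_cong)
    fix \<xi>
    have e1: "cnj \<xi> * (2 * sqrt l * cinner d a y) = (\<Sum>k<d. cnj (a k) * (2 * sqrt l * cnj \<xi> * y k))" for a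
      unfolding cinner_def by (simp add: sum_distrib_left algebra_simps)
    have e2: "(\<Sum>k<d. (cmod (2 * sqrt l * cnj \<xi> * y k))\<^sup>2) / 4 = (l * (cnorm2 d y)\<^sup>2) * (cmod \<xi>)\<^sup>2"
      using l unfolding nn by (simp add: norm_mult power_mult_distrib sum_distrib_left sum_divide_distrib algebra_simps)
    show "(\<integral>\<^sup>+a. ennreal (exp (Re (cnj \<xi> * (2 * sqrt l * cinner d a y)))) \<partial>complex_gauss_vec d) =
       ennreal (exp ((l * (cnorm2 d y)\<^sup>2) * (cmod \<xi>)\<^sup>2))"
      unfolding e1 cgv_mgf e2 ..
  qed
  also have "\<dots> = ennreal (1 / (1 - l * (cnorm2 d y)\<^sup>2))"
    by (rule cgauss_sq_mgf[OF l(2)])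
  finally show ?thesis .
qed


definition Qf :: "nat \<Rightarrow> nat \<Rightarrow> (nat \<Rightarrow> nat \<Rightarrow> complex) \<Rightarrow> (nat \<Rightarrow> complex) \<Rightarrow> real" where
  "Qf m d A y = (\<Sum>j<m. (cmod (cinner d (A j) y))\<^sup>2)"

lemma Qf_meas[measurable]: "(\<lambda>A. Qf m d A y) \<in> borel_measurable (gauss_sample m d)"
proof -
  have "(\<lambda>A. cinner d (A j) y) \<in> borel_measurable (gauss_sample m d)" if "j < m" for j
    unfolding gauss_sample_def
    by (rule measurable_compose[OF measurable_component_singleton[of j "{..<m}" "\<lambda>_. complex_gauss_vec d"] cinner_meas]) (use that in simp)
  moreover have "(\<lambda>z::complex. (cmod z)\<^sup>2) \<in> borel_measurable borel" by measurable
  ultimately have "(\<lambda>A. (cmod (cinner d (A j) y))\<^sup>2) \<in> borel_measurable (gauss_sample m d)" if "j < m" for j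
    using measurable_compose that by blast
  then show ?thesis unfolding Qf_def by (intro borel_measurable_sum) auto
qed

lemma gs_mgf: assumes l: "0 \<le> l" "l * (cnorm2 d y)\<^sup>2 < 1"
  shows "(\<integral>\<^sup>+A. ennreal (exp (l * Qf m d A y)) \<partial>gauss_sample m d) = ennreal ((1 / (1 - l * (cnorm2 d y)\<^sup>2)) ^ m)"
proof -
  interpret product_sigma_finite "\<lambda>_. complex_gauss_vec d"
    unfolding product_sigma_finite_def using prob_cgv prob_space_imp_sigma_finite by blast
  have "(\<integral>\<^sup>+A. ennreal (exp (l * Qf m d A y)) \<partial>gauss_sample m d)
     = (\<integral>\<^sup>+A. (\<Prod>j<m. (\<lambda>j a. ennreal (exp (l * (cmod (cinner d a y))\<^sup>2))) j (A j)) \<partial>gauss_sample m d)"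
    unfolding Qf_def by (intro nn_integral_cong) (simp add: exp_sum prod_ennreal sum_distrib_left)
  also have "\<dots> = (\<Prod>j<m. ennreal (1 / (1 - l * (cnorm2 d y)\<^sup>2)))"
    unfolding gauss_sample_def
    apply (subst product_nn_integral_prod)
      prefer 3 apply (simp only: cgv_sq_mgf[OF l])
     apply auto
    done
  also have "\<dots> = ennreal ((1 / (1 - l * (cnorm2 d y)\<^sup>2)) ^ m)"
    using l by (simp add: prod_ennreal ennreal_power)
  finally show ?thesis .
qed

lemma chernoff: assumes l: "0 < l" "l * (cnorm2 d y)\<^sup>2 < 1"
  shows "measure (gauss_sample m d) {A \<in> space (gauss_sample m d). t < Qf m d A y}
     \<le> exp (- l * t) * (1 / (1 - l * (cnorm2 d y)\<^sup>2)) ^ m"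
proof -
  let ?M = "gauss_sample m d"
  interpret prob_space ?M by (rule prob_gs)
  have sub: "{A \<in> space ?M. t < Qf m d A y} \<subseteq> {A \<in> space ?M. 1 \<le> ennreal (exp (- l * t)) * ennreal (exp (l * Qf m d A y))}"
  proof safe
    fix A assume "A \<in> space ?M" "t < Qf m d A y"
    then have "1 \<le> exp (- l * t) * exp (l * Qf m d A y)"
      using l by (simp add: exp_add[symmetric] algebra_simps)
    then show "1 \<le> ennreal (exp (- l * t)) * ennreal (exp (l * Qf m d A y))"
      using \<open>A \<in> space ?M\<close> by (simp add: ennreal_mult[symmetric])
  qed
  have "emeasure ?M {A \<in> space ?M. t < Qf m d A y} \<le> emeasure ?M {A \<in> space ?M. 1 \<le> ennreal (exp (- l * t)) * ennreal (exp (l * Qf m d A y))}"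
    by (rule emeasure_mono[OF sub]) measurable
  also have "\<dots> \<le> ennreal (exp (- l * t)) * (\<integral>\<^sup>+A. ennreal (exp (l * Qf m d A y)) * indicator (space ?M) A \<partial>?M)"
    by (rule nn_integral_Markov_inequality) auto
  also have "(\<integral>\<^sup>+A. ennreal (exp (l * Qf m d A y)) * indicator (space ?M) A \<partial>?M) = (\<integral>\<^sup>+A. ennreal (exp (l * Qf m d A y)) \<partial>?M)"
    by (intro nn_integral_cong) auto
  also have "\<dots> = ennreal ((1 / (1 - l * (cnorm2 d y)\<^sup>2)) ^ m)"
    using l by (intro gs_mgf) auto
  finally have "emeasure ?M {A \<in> space ?M. t < Qf m d A y} \<le> ennreal (exp (- l * t) * (1 / (1 - l * (cnorm2 d y)\<^sup>2)) ^ m)"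
    using l by (simp add: ennreal_mult[symmetric])
  then show ?thesis
    using l by (simp add: emeasure_eq_measure)
qed


lemma cnorm2_L2: "cnorm2 n z = L2_set (\<lambda>k. cmod (z k)) {..<n}"
  unfolding cnorm2_def L2_set_def ..

definition qn :: "nat \<Rightarrow> nat \<Rightarrow> (nat \<Rightarrow> nat \<Rightarrow> complex) \<Rightarrow> (nat \<Rightarrow> complex) \<Rightarrow> real" where
  "qn m d A u = L2_set (\<lambda>j. cmod (cinner d (A j) u)) {..<m}"

lemma Qf_qn: "Qf m d A u = (qn m d A u)\<^sup>2"
  unfolding Qf_def qn_def L2_set_def by (simp add: sum_nonneg)

lemma cinner_add: "cinner d a (\<lambda>k. u k + v k) = cinner d a u + cinner d a v"
  unfolding cinner_def by (simp add: algebra_simps sum.distrib)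

lemma cinner_diff: "cinner d a (\<lambda>k. u k - v k) = cinner d a u - cinner d a v"
  unfolding cinner_def by (simp add: algebra_simps sum_subtractf)

lemma cinner_scale: "cinner d a (\<lambda>k. c * u k) = c * cinner d a u"
  unfolding cinner_def by (simp add: algebra_simps sum_distrib_left)

lemma cnorm2_nonneg: "0 \<le> cnorm2 n z"
  unfolding cnorm2_L2 by simp

lemma cnorm2_scale: "cnorm2 d (\<lambda>k. complex_of_real c * u k) = \<bar>c\<bar> * cnorm2 d u"
  unfolding cnorm2_L2 by (simp add: L2_set_right_distrib norm_mult)

lemma cnorm2_triangle: "cnorm2 d (\<lambda>k. u k + v k) \<le> cnorm2 d u + cnorm2 d v"
proof -
  have "cnorm2 d (\<lambda>k. u k + v k) \<le> L2_set (\<lambda>k. cmod (u k) + cmod (v k)) {..<d}"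
    unfolding cnorm2_L2 by (intro L2_set_mono norm_triangle_ineq) auto
  also have "\<dots> \<le> cnorm2 d u + cnorm2 d v"
    unfolding cnorm2_L2 by (rule L2_set_triangle_ineq)
  finally show ?thesis .
qed

lemma cnorm2_triangle2: "cnorm2 d y \<le> cnorm2 d z + cnorm2 d (\<lambda>k. z k - y k)"
proof -
  have "cnorm2 d y \<le> L2_set (\<lambda>k. cmod (z k) + cmod (z k - y k)) {..<d}"
    unfolding cnorm2_L2
  proof (intro L2_set_mono)
    fix i show "cmod (y i) \<le> cmod (z i) + cmod (z i - y i)"
      using norm_triangle_ineq2[of "y i" "z i"] by (simp add: norm_minus_commute)
  qed auto
  also have "\<dots> \<le> cnorm2 d z + cnorm2 d (\<lambda>k. z k - y k)"
    unfolding cnorm2_L2 by (rule L2_set_triangle_ineq)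
  finally show ?thesis .
qed

lemma cnorm2_zero: assumes "cnorm2 d u = 0" shows "cinner d a u = 0"
proof -
  have "\<forall>k\<in>{..<d}. cmod (u k) = 0" using assms unfolding cnorm2_L2 by (subst (asm) L2_set_eq_0_iff) auto
  then show ?thesis unfolding cinner_def by simp
qed

lemma qn_nonneg: "0 \<le> qn m d A u" unfolding qn_def by simp

lemma qn_add: "qn m d A (\<lambda>k. u k + v k) \<le> qn m d A u + qn m d A v"
proof -
  have "qn m d A (\<lambda>k. u k + v k) \<le> L2_set (\<lambda>j. cmod (cinner d (A j) u) + cmod (cinner d (A j) v)) {..<m}"
    unfolding qn_def cinner_add by (intro L2_set_mono norm_triangle_ineq) auto
  also have "\<dots> \<le> qn m d A u + qn m d A v"
    unfolding qn_def by (rule L2_set_triangle_ineq)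
  finally show ?thesis .
qed

lemma qn_diff: "qn m d A (\<lambda>k. u k - v k) \<le> qn m d A u + qn m d A v"
proof -
  have "qn m d A (\<lambda>k. u k - v k) \<le> L2_set (\<lambda>j. cmod (cinner d (A j) u) + cmod (cinner d (A j) v)) {..<m}"
    unfolding qn_def cinner_diff by (intro L2_set_mono norm_triangle_ineq4) auto
  also have "\<dots> \<le> qn m d A u + qn m d A v"
    unfolding qn_def by (rule L2_set_triangle_ineq)
  finally show ?thesis .
qed

lemma qn_scale: "qn m d A (\<lambda>k. complex_of_real c * u k) = \<bar>c\<bar> * qn m d A u"
  unfolding qn_def cinner_scale by (simp add: L2_set_right_distrib norm_mult)

lemma qn_zero: "cnorm2 d u = 0 \<Longrightarrow> qn m d A u = 0"
  unfolding qn_def by (simp add: cnorm2_zero L2_set_def)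

lemma qn_bound: "qn m d A u \<le> L2_set (\<lambda>j. \<Sum>k<d. cmod (A j k)) {..<m} * cnorm2 d u"
proof -
  have "cmod (cinner d (A j) u) \<le> (\<Sum>k<d. cmod (A j k)) * cnorm2 d u" for j
  proof -
    have "cmod (cinner d (A j) u) \<le> (\<Sum>k<d. cmod (A j k) * cmod (u k))"
      unfolding cinner_def by (rule order_trans[OF norm_sum]) (simp add: norm_mult)
    also have "\<dots> \<le> (\<Sum>k<d. cmod (A j k) * cnorm2 d u)"
      unfolding cnorm2_L2 by (intro sum_mono mult_left_mono member_le_L2_set) auto
    finally show ?thesis by (simp add: sum_distrib_right)
  qed
  then have "qn m d A u \<le> L2_set (\<lambda>j. (\<Sum>k<d. cmod (A j k)) * cnorm2 d u) {..<m}"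
    unfolding qn_def by (intro L2_set_mono) auto
  also have "\<dots> = L2_set (\<lambda>j. \<Sum>k<d. cmod (A j k)) {..<m} * cnorm2 d u"
    by (simp add: L2_set_left_distrib cnorm2_nonneg)
  finally show ?thesis .
qed

lemma qn_hom: assumes "\<forall>z. cnorm2 d z \<le> 1 \<longrightarrow> qn m d A z \<le> S"
  shows "qn m d A u \<le> S * cnorm2 d u"
proof (cases "cnorm2 d u = 0")
  case True then show ?thesis by (simp add: qn_zero)
next
  case False
  then have pos: "cnorm2 d u > 0" using cnorm2_nonneg[of d u] by linarith
  let ?v = "\<lambda>k. complex_of_real (1 / cnorm2 d u) * u k"
  have "cnorm2 d ?v = 1" using pos by (subst cnorm2_scale) simp
  then have "qn m d A ?v \<le> S" using assms by auto
  then have "qn m d A u / cnorm2 d u \<le> S" using pos by (subst (asm) qn_scale) simp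
  then show ?thesis using pos by (simp add: field_simps)
qed

lemma net_bound:
  assumes eps: "0 \<le> \<epsilon>" "\<epsilon> < 1" and a: "0 \<le> a"
  and approx: "\<And>z. cnorm2 d z \<le> 1 \<Longrightarrow> \<exists>y\<in>N. cnorm2 d (\<lambda>k. z k - y k) \<le> \<epsilon>"
  and good: "\<And>y. y \<in> N \<Longrightarrow> qn m d A y \<le> a * cnorm2 d y"
  shows "qn m d A u \<le> a * (1 + \<epsilon>) / (1 - \<epsilon>) * cnorm2 d u"
proof -
  define Z where "Z = {z. cnorm2 d z \<le> 1}"
  define S where "S = (SUP z\<in>Z. qn m d A z)"
  define F where "F = L2_set (\<lambda>j. \<Sum>k<d. cmod (A j k)) {..<m}"
  have F: "0 \<le> F" unfolding F_def by simp
  have bdd: "bdd_above (qn m d A ` Z)"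
  proof (rule bdd_aboveI)
    fix x assume "x \<in> qn m d A ` Z"
    then obtain z where z: "z \<in> Z" "x = qn m d A z" by auto
    have "x \<le> F * cnorm2 d z" using qn_bound z unfolding F_def by simp
    also have "\<dots> \<le> F" using z F by (simp add: Z_def mult_left_le)
    finally show "x \<le> F" .
  qed
  have Zne: "(\<lambda>k. 0) \<in> Z" unfolding Z_def cnorm2_def by simp
  have le_S: "\<forall>z. cnorm2 d z \<le> 1 \<longrightarrow> qn m d A z \<le> S"
    unfolding S_def using bdd by (auto intro!: cSUP_upper simp: Z_def)
  have hom: "qn m d A v \<le> S * cnorm2 d v" for v by (rule qn_hom[OF le_S])
  have "qn m d A z \<le> a * (1 + \<epsilon>) + \<epsilon> * S" if "z \<in> Z" for z
  proof -
    from that approx obtain y where y: "y \<in> N" "cnorm2 d (\<lambda>k. z k - y k) \<le> \<epsilon>" unfolding Z_def by blast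
    have ny: "cnorm2 d y \<le> 1 + \<epsilon>"
      using cnorm2_triangle2[of d y z] y that unfolding Z_def by simp
    have S0: "0 \<le> S" using le_S[rule_format, of "\<lambda>k. 0"] qn_nonneg[of m d A "\<lambda>k. 0"] Zne unfolding Z_def by simp
    have zz: "z = (\<lambda>k. y k + (z k - y k))" by simp
    have "qn m d A z \<le> qn m d A y + qn m d A (\<lambda>k. z k - y k)"
      by (subst zz, rule qn_add)
    also have "\<dots> \<le> a * (1 + \<epsilon>) + S * \<epsilon>"
      using good[OF y(1)] hom[of "\<lambda>k. z k - y k"] ny y(2) a S0
      by (intro add_mono) (auto intro: order_trans mult_left_mono)
    finally show ?thesis by (simp add: algebra_simps)
  qed
  then have "S \<le> a * (1 + \<epsilon>) + \<epsilon> * S"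
    unfolding S_def using Zne by (intro cSUP_least) auto
  then have "S * (1 - \<epsilon>) \<le> a * (1 + \<epsilon>)" by (simp add: algebra_simps)
  then have Sle: "S \<le> a * (1 + \<epsilon>) / (1 - \<epsilon>)" using eps by (simp add: field_simps)
  show ?thesis using hom[of u] mult_right_mono[OF Sle cnorm2_nonneg[of d u]] by linarith
qed


lemma sq_diff_bound: "\<bar>(cmod p)\<^sup>2 - (cmod q)\<^sup>2\<bar> \<le> cmod (p - q) * cmod (p + q)"
proof -
  have "(cmod p)\<^sup>2 - (cmod q)\<^sup>2 = Re ((p - q) * cnj (p + q))"
    unfolding cmod_power2 by (simp add: power2_eq_square algebra_simps)
  also have "\<bar>\<dots>\<bar> \<le> cmod ((p - q) * cnj (p + q))" by (rule abs_Re_le_cmod)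
  also have "\<dots> = cmod (p - q) * cmod (p + q)" unfolding norm_mult complex_mod_cnj ..
  finally show ?thesis .
qed

lemma final_ineq:
  assumes H: "\<And>u. qn m d A u \<le> sqrt (3/2 * real m) * cnorm2 d u"
  shows "(1 / real m) * (\<Sum>j<m. \<bar>(cmod (cinner d (A j) z + b j))\<^sup>2
                                  - (cmod (cinner d (A j) w + b j))\<^sup>2\<bar>)
            \<le> 3 / 2 * (cnorm2 d z + cnorm2 d w + 2 * cnorm2 m b / sqrt (real m))
                    * cnorm2 d (\<lambda>k. z k - w k)"
proof (cases "m = 0")
  case True then show ?thesis by (simp add: cnorm2_nonneg)
next
  case False
  define s where "s = sqrt (3/2 * real m)"
  define D where "D = cnorm2 d (\<lambda>k. z k - w k)"
  define Z where "Z = cnorm2 d z"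
  define W where "W = cnorm2 d w"
  define B where "B = cnorm2 m b"
  define e where "e = (\<lambda>j. cinner d (A j) (\<lambda>k. z k - w k))"
  define t where "t = (\<lambda>j. cinner d (A j) (\<lambda>k. z k + w k) + 2 * b j)"
  have nn: "0 \<le> D" "0 \<le> Z" "0 \<le> W" "0 \<le> B" "0 \<le> s"
    unfolding D_def Z_def W_def B_def s_def by (simp_all add: cnorm2_nonneg)
  have "(\<Sum>j<m. \<bar>(cmod (cinner d (A j) z + b j))\<^sup>2 - (cmod (cinner d (A j) w + b j))\<^sup>2\<bar>)
      \<le> (\<Sum>j<m. \<bar>cmod (e j)\<bar> * \<bar>cmod (t j)\<bar>)"
  proof (intro sum_mono)
    fix j
    have "\<bar>(cmod (cinner d (A j) z + b j))\<^sup>2 - (cmod (cinner d (A j) w + b j))\<^sup>2\<bar>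
       \<le> cmod ((cinner d (A j) z + b j) - (cinner d (A j) w + b j)) * cmod ((cinner d (A j) z + b j) + (cinner d (A j) w + b j))"
      by (rule sq_diff_bound)
    also have "\<dots> = \<bar>cmod (e j)\<bar> * \<bar>cmod (t j)\<bar>"
      unfolding e_def t_def cinner_diff cinner_add by (simp add: algebra_simps)
    finally show "\<bar>(cmod (cinner d (A j) z + b j))\<^sup>2 - (cmod (cinner d (A j) w + b j))\<^sup>2\<bar> \<le> \<bar>cmod (e j)\<bar> * \<bar>cmod (t j)\<bar>" .
  qed
  also have "\<dots> \<le> L2_set (\<lambda>j. cmod (e j)) {..<m} * L2_set (\<lambda>j. cmod (t j)) {..<m}"
    by (rule L2_set_mult_ineq)
  finally have S1: "(\<Sum>j<m. \<bar>(cmod (cinner d (A j) z + b j))\<^sup>2 - (cmod (cinner d (A j) w + b j))\<^sup>2\<bar>)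
      \<le> L2_set (\<lambda>j. cmod (e j)) {..<m} * L2_set (\<lambda>j. cmod (t j)) {..<m}" .
  have le1: "L2_set (\<lambda>j. cmod (e j)) {..<m} \<le> s * D"
    using H[of "\<lambda>k. z k - w k"] unfolding qn_def e_def s_def D_def .
  have le2: "L2_set (\<lambda>j. cmod (t j)) {..<m} \<le> s * (Z + W) + 2 * B"
  proof -
    have "L2_set (\<lambda>j. cmod (t j)) {..<m} \<le> L2_set (\<lambda>j. cmod (cinner d (A j) (\<lambda>k. z k + w k)) + 2 * cmod (b j)) {..<m}"
      unfolding t_def by (intro L2_set_mono) (auto intro: order_trans[OF norm_triangle_ineq] simp: norm_mult)
    also have "\<dots> \<le> qn m d A (\<lambda>k. z k + w k) + L2_set (\<lambda>j. 2 * cmod (b j)) {..<m}"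
      unfolding qn_def by (rule L2_set_triangle_ineq)
    also have "L2_set (\<lambda>j. 2 * cmod (b j)) {..<m} = 2 * B"
      unfolding B_def cnorm2_L2 by (simp add: L2_set_right_distrib)
    also have "qn m d A (\<lambda>k. z k + w k) \<le> s * (Z + W)"
      using qn_add[of m d A z w] H[of z] H[of w] unfolding s_def Z_def W_def by (simp add: algebra_simps)
    finally show ?thesis by simp
  qed
  have sum_le: "(\<Sum>j<m. \<bar>(cmod (cinner d (A j) z + b j))\<^sup>2 - (cmod (cinner d (A j) w + b j))\<^sup>2\<bar>)
      \<le> s * D * (s * (Z + W) + 2 * B)"
    using S1 mult_mono[OF le1 le2] nn by (simp add: mult_nonneg_nonneg)
  define r where "r = sqrt (real m)"
  have r: "r > 0" "r\<^sup>2 = real m" using False unfolding r_def by auto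
  define c0 where "c0 = sqrt (3/2 :: real)"
  have c0: "c0\<^sup>2 = 3/2" "0 \<le> c0" "c0 \<le> 3/2"
  proof -
    show "c0\<^sup>2 = 3/2" "0 \<le> c0" unfolding c0_def by simp_all
    have "sqrt (3/2) \<le> sqrt ((3/2)\<^sup>2::real)" by (subst real_sqrt_le_iff) (simp add: power2_eq_square)
    then show "c0 \<le> 3/2" unfolding c0_def by simp
  qed
  have sr: "s = c0 * r" unfolding s_def c0_def r_def using real_sqrt_mult[of "3/2" "real m"] by simp
  have "(1 / real m) * (s * D * (s * (Z + W) + 2 * B)) = c0\<^sup>2 * D * (Z + W) + 2 * c0 * D * B / r"
    using r(1) unfolding sr r(2)[symmetric] by (simp add: field_simps power2_eq_square)
  also have "\<dots> \<le> 3/2 * D * (Z + W) + 2 * (3/2) * D * B / r"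
  proof -
    have "2 * c0 * D * B / r \<le> 2 * (3/2) * D * B / r"
      using c0 nn r by (intro divide_right_mono mult_right_mono) auto
    moreover have "c0\<^sup>2 * D * (Z + W) = 3/2 * D * (Z + W)" unfolding c0(1) ..
    ultimately show ?thesis by linarith
  qed
  also have "\<dots> = 3 / 2 * (Z + W + 2 * B / r) * D"
    by (simp add: field_simps)
  finally have "(1 / real m) * (s * D * (s * (Z + W) + 2 * B)) \<le> 3 / 2 * (Z + W + 2 * B / r) * D" .
  moreover have "(1 / real m) * (\<Sum>j<m. \<bar>(cmod (cinner d (A j) z + b j))\<^sup>2 - (cmod (cinner d (A j) w + b j))\<^sup>2\<bar>)
      \<le> (1 / real m) * (s * D * (s * (Z + W) + 2 * B))"
    using sum_le by (intro mult_left_mono) auto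
  ultimately show ?thesis unfolding Z_def W_def B_def D_def r_def by linarith
qed


lemma count_weight:
  fixes w :: "'b \<Rightarrow> nat"
  assumes I: "finite I" and B: "finite B"
  shows "real (card {n \<in> I \<rightarrow>\<^sub>E B. (\<Sum>i\<in>I. w (n i)) \<le> K}) \<le> 2 ^ K * (\<Sum>b\<in>B. (1/2::real) ^ w b) ^ card I"
proof -
  let ?S = "{n \<in> I \<rightarrow>\<^sub>E B. (\<Sum>i\<in>I. w (n i)) \<le> K}"
  have fin: "finite (I \<rightarrow>\<^sub>E B)" using I B by (intro finite_PiE) auto
  have "real (card ?S) = (\<Sum>n\<in>?S. 1)" by simp
  also have "\<dots> \<le> (\<Sum>n\<in>?S. 2 ^ K * (\<Prod>i\<in>I. (1/2::real) ^ w (n i)))"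
  proof (intro sum_mono)
    fix n assume n: "n \<in> ?S"
    have "(\<Prod>i\<in>I. (1/2::real) ^ w (n i)) = (1/2) ^ (\<Sum>i\<in>I. w (n i))"
      by (simp add: power_sum)
    also have "\<dots> \<ge> (1/2) ^ K" using n by (intro power_decreasing) auto
    finally have "(1/2::real) ^ K \<le> (\<Prod>i\<in>I. (1/2::real) ^ w (n i))" .
    then have "2 ^ K * (1/2::real) ^ K \<le> 2 ^ K * (\<Prod>i\<in>I. (1/2::real) ^ w (n i))" by simp
    then show "1 \<le> 2 ^ K * (\<Prod>i\<in>I. (1/2::real) ^ w (n i))" by (simp add: power_one_over)
  qed
  also have "\<dots> \<le> (\<Sum>n\<in>I \<rightarrow>\<^sub>E B. 2 ^ K * (\<Prod>i\<in>I. (1/2::real) ^ w (n i)))"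
    using fin by (intro sum_mono2) (auto intro!: mult_nonneg_nonneg prod_nonneg)
  also have "\<dots> = 2 ^ K * (\<Prod>i\<in>I. \<Sum>b\<in>B. (1/2::real) ^ w b)"
    using prod_sum_PiE[OF I B, of "\<lambda>i b. (1/2::real) ^ w b"] by (simp add: sum_distrib_left)
  also have "\<dots> = 2 ^ K * (\<Sum>b\<in>B. (1/2::real) ^ w b) ^ card I" by simp
  finally show ?thesis .
qed

lemma sum_half_int: "(\<Sum>a\<in>{-int n..int n}. (1/2::real) ^ nat \<bar>a\<bar>) = 3 - 2 * (1/2) ^ n"
proof (induction n)
  case 0 then show ?case by simp
next
  case (Suc n)
  have e: "{-int (Suc n)..int (Suc n)} = insert (-int (Suc n)) (insert (int (Suc n)) {-int n..int n})" by auto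
  have n1: "nat (int n + 1) = Suc n" "nat (1 + int n) = Suc n" by auto
  show ?case unfolding e using Suc by (simp add: n1)
qed

definition wt :: "int \<times> int \<Rightarrow> nat" where "wt p = nat \<bar>fst p\<bar> + nat \<bar>snd p\<bar>"
definition box :: "nat \<Rightarrow> (int \<times> int) set" where "box R = {-int R..int R} \<times> {-int R..int R}"

lemma box_sum: "(\<Sum>p\<in>box R. (1/2::real) ^ wt p) \<le> 9"
proof -
  have "(\<Sum>p\<in>box R. (1/2::real) ^ wt p) = (\<Sum>a\<in>{-int R..int R}. (1/2::real) ^ nat \<bar>a\<bar>) * (\<Sum>a\<in>{-int R..int R}. (1/2::real) ^ nat \<bar>a\<bar>)"
    unfolding box_def wt_def by (simp add: sum_product sum.cartesian_product power_add case_prod_beta)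
  also have "\<dots> \<le> 3 * 3"
  proof -
    have "(1/2::real)^R \<le> 1" by (rule power_le_one) auto
    moreover have "(0::real) \<le> (1/2)^R" by simp
    ultimately show ?thesis unfolding sum_half_int by (intro mult_mono) auto
  qed
  finally show ?thesis by simp
qed

definition Nint :: "nat \<Rightarrow> (nat \<Rightarrow> int \<times> int) set" where
  "Nint d = {n \<in> {..<d} \<rightarrow>\<^sub>E box (102 * d). (\<Sum>k\<in>{..<d}. wt (n k)) \<le> 102 * d}"

lemma finite_Nint: "finite (Nint d)"
  unfolding Nint_def box_def by (intro finite_subset[OF _ finite_PiE[of "{..<d}" "\<lambda>_. box (102 * d)"]]) (auto simp: box_def)

lemma card_Nint: "real (card (Nint d)) \<le> (2 ^ 102 * 9) ^ d"
proof -
  have "real (card (Nint d)) \<le> 2 ^ (102 * d) * (\<Sum>b\<in>box (102 * d). (1/2::real) ^ wt b) ^ card {..<d}"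
    unfolding Nint_def by (rule count_weight) (auto simp: box_def)
  also have "\<dots> \<le> 2 ^ (102 * d) * 9 ^ d"
  proof -
    have "0 \<le> (\<Sum>b\<in>box (102 * d). (1/2::real) ^ wt b)" by (intro sum_nonneg) simp
    then show ?thesis using power_mono[OF box_sum[of "102*d"], of d] by (intro mult_left_mono) auto
  qed
  also have "\<dots> = (2 ^ 102 * 9) ^ d" by (simp only: power_mult power_mult_distrib)
  finally show ?thesis .
qed


definition dl :: "nat \<Rightarrow> real" where "dl d = sqrt (2 / real d) / 20"

definition emb :: "nat \<Rightarrow> (nat \<Rightarrow> int \<times> int) \<Rightarrow> nat \<Rightarrow> complex" where
  "emb d n = (\<lambda>k. if k < d then complex_of_real (dl d) * Complex (of_int (fst (n k))) (of_int (snd (n k))) else 0)"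

definition net :: "nat \<Rightarrow> (nat \<Rightarrow> complex) set" where "net d = emb d ` Nint d"

lemma finite_net: "finite (net d)" unfolding net_def using finite_Nint by simp

lemma card_net: "real (card (net d)) \<le> (2 ^ 102 * 9) ^ d"
  unfolding net_def using card_image_le[OF finite_Nint, of "emb d" d] card_Nint[of d]
  by (meson of_nat_le_iff order_trans)

lemma abs_le_sq: fixes t :: real shows "\<bar>t\<bar> \<le> (t\<^sup>2 + 1) / 2"
proof -
  have "0 \<le> (\<bar>t\<bar> - 1)\<^sup>2" by simp
  moreover have "(\<bar>t\<bar> - 1)\<^sup>2 = t\<^sup>2 - 2 * \<bar>t\<bar> + 1" by (simp add: power2_eq_square algebra_simps)
  ultimately have "2 * \<bar>t\<bar> \<le> t\<^sup>2 + 1" by linarith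
  then show ?thesis by simp
qed

lemma round_wt: assumes "\<delta> > 0"
  shows "real (nat \<bar>round (x / \<delta>)\<bar>) \<le> x\<^sup>2 / (2 * \<delta>\<^sup>2) + 1"
proof -
  have "\<bar>of_int (round (x / \<delta>)) - x / \<delta>\<bar> \<le> 1/2" by (rule of_int_round_abs_le)
  then have "\<bar>real_of_int (round (x / \<delta>))\<bar> \<le> \<bar>x / \<delta>\<bar> + 1/2" by linarith
  moreover have "\<bar>x / \<delta>\<bar> \<le> ((x / \<delta>)\<^sup>2 + 1) / 2"
    by (rule abs_le_sq)
  moreover have "(x / \<delta>)\<^sup>2 = x\<^sup>2 / \<delta>\<^sup>2" by (simp add: power_divide)
  ultimately show ?thesis by (simp add: add_divide_distrib)
qed

lemma round_err: assumes "\<delta> > 0" shows "\<bar>x - \<delta> * of_int (round (x / \<delta>))\<bar> \<le> \<delta> / 2"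
proof -
  have "\<bar>of_int (round (x / \<delta>)) - x / \<delta>\<bar> \<le> 1/2" by (rule of_int_round_abs_le)
  then have "\<delta> * \<bar>of_int (round (x / \<delta>)) - x / \<delta>\<bar> \<le> \<delta> * (1/2)" using assms by (intro mult_left_mono) auto
  moreover have "\<delta> * \<bar>of_int (round (x / \<delta>)) - x / \<delta>\<bar> = \<bar>x - \<delta> * of_int (round (x / \<delta>))\<bar>"
  proof -
    have "\<delta> * \<bar>of_int (round (x / \<delta>)) - x / \<delta>\<bar> = \<bar>\<delta> * (of_int (round (x / \<delta>)) - x / \<delta>)\<bar>"
      using assms by (simp add: abs_mult)
    also have "\<delta> * (of_int (round (x / \<delta>)) - x / \<delta>) = - (x - \<delta> * of_int (round (x / \<delta>)))"
      using assms by (simp add: algebra_simps)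
    finally show ?thesis by simp
  qed
  ultimately show ?thesis by simp
qed

lemma approx:
  assumes z: "cnorm2 d z \<le> 1"
  shows "\<exists>y\<in>net d. cnorm2 d (\<lambda>k. z k - y k) \<le> 1/20"
proof (cases "d = 0")
  case True
  have "(\<lambda>_. undefined) \<in> Nint 0" unfolding Nint_def by auto
  then have "emb 0 (\<lambda>_. undefined) \<in> net 0" unfolding net_def by auto
  then show ?thesis using True by (intro bexI[of _ "emb 0 (\<lambda>_. undefined)"]) (auto simp: cnorm2_def)
next
  case False
  define \<delta> where "\<delta> = dl d"
  have dpos: "real d > 0" using False by simp
  have \<delta>: "\<delta> > 0" using dpos unfolding \<delta>_def dl_def by simp
  have \<delta>2: "\<delta>\<^sup>2 = 1 / (200 * real d)" using dpos unfolding \<delta>_def dl_def by (simp add: power_divide)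
  define n where "n = restrict (\<lambda>k. (round (Re (z k) / \<delta>), round (Im (z k) / \<delta>))) {..<d}"
  have zn: "(\<Sum>k<d. (cmod (z k))\<^sup>2) \<le> 1"
    using z unfolding cnorm2_def by (metis abs_of_nonneg norm_ge_zero real_sqrt_le_1_iff sum_nonneg zero_le_power2)
  have wk: "real (wt (n k)) \<le> (cmod (z k))\<^sup>2 / (2 * \<delta>\<^sup>2) + 2" if "k < d" for k
  proof -
    have "real (wt (n k)) = real (nat \<bar>round (Re (z k) / \<delta>)\<bar>) + real (nat \<bar>round (Im (z k) / \<delta>)\<bar>)"
      using that unfolding wt_def n_def by simp
    also have "\<dots> \<le> ((Re (z k))\<^sup>2 / (2 * \<delta>\<^sup>2) + 1) + ((Im (z k))\<^sup>2 / (2 * \<delta>\<^sup>2) + 1)"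
      by (intro add_mono round_wt \<delta>)
    also have "\<dots> = (cmod (z k))\<^sup>2 / (2 * \<delta>\<^sup>2) + 2"
      by (simp add: cmod_power2 add_divide_distrib)
    finally show ?thesis .
  qed
  have "real (\<Sum>k<d. wt (n k)) \<le> (\<Sum>k<d. (cmod (z k))\<^sup>2 / (2 * \<delta>\<^sup>2) + 2)"
    unfolding of_nat_sum by (intro sum_mono wk) auto
  also have "\<dots> = (\<Sum>k<d. (cmod (z k))\<^sup>2) / (2 * \<delta>\<^sup>2) + 2 * real d"
    by (simp add: sum.distrib sum_divide_distrib)
  also have "\<dots> \<le> 1 / (2 * \<delta>\<^sup>2) + 2 * real d"
    using zn \<delta> by (intro add_mono divide_right_mono) auto
  also have "\<dots> = real (102 * d)" using dpos unfolding \<delta>2 by simp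
  finally have sumw: "(\<Sum>k<d. wt (n k)) \<le> 102 * d" by linarith
  have "n \<in> Nint d"
  proof -
    have "n k \<in> box (102 * d)" if "k < d" for k
    proof -
      have "wt (n k) \<le> (\<Sum>k<d. wt (n k))" using that by (intro member_le_sum) auto
      then have "wt (n k) \<le> 102 * d" using sumw by linarith
      then show ?thesis unfolding box_def wt_def by (cases "n k") auto
    qed
    then show ?thesis unfolding Nint_def using sumw by (auto simp: n_def)
  qed
  then have yin: "emb d n \<in> net d" unfolding net_def by auto
  have ek: "(cmod (z k - emb d n k))\<^sup>2 \<le> \<delta>\<^sup>2 / 2" if "k < d" for k
  proof -
    have "(cmod (z k - emb d n k))\<^sup>2 = (Re (z k) - \<delta> * of_int (round (Re (z k) / \<delta>)))\<^sup>2 + (Im (z k) - \<delta> * of_int (round (Im (z k) / \<delta>)))\<^sup>2"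
      using that unfolding emb_def n_def \<delta>_def by (simp add: cmod_power2)
    also have "\<dots> \<le> (\<delta>/2)\<^sup>2 + (\<delta>/2)\<^sup>2"
      using round_err[OF \<delta>] by (intro add_mono) (auto simp: abs_le_square_iff[symmetric] \<delta> less_imp_le)
    also have "\<dots> = \<delta>\<^sup>2 / 2" by (simp add: power_divide)
    finally show ?thesis .
  qed
  have "(\<Sum>k<d. (cmod (z k - emb d n k))\<^sup>2) \<le> (\<Sum>k<d. \<delta>\<^sup>2 / 2)"
    by (intro sum_mono ek) auto
  also have "\<dots> = 1 / 400" using dpos unfolding \<delta>2 by simp
  finally have "cnorm2 d (\<lambda>k. z k - emb d n k) \<le> sqrt (1/400)"
    unfolding cnorm2_def by (rule real_sqrt_le_mono)
  also have "sqrt (1/400 :: real) = 1/20" by (simp add: real_sqrt_divide)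
  finally show ?thesis using yin by blast
qed


definition rr :: real where "rr = 6/5 * exp (- 1/5)"

lemma rr_bounds: "0 < rr" "rr < 1"
proof -
  show "0 < rr" unfolding rr_def by simp
  have "1 + 1/10 \<le> exp (1/10::real)" by (rule exp_ge_add_one_self)
  then have "(1 + 1/10)\<^sup>2 \<le> (exp (1/10::real))\<^sup>2" by (intro power_mono) auto
  also have "(exp (1/10::real))\<^sup>2 = exp (1/5)" by (simp add: power2_eq_square exp_add[symmetric])
  finally have "6/5 < exp (1/5::real)" by (simp add: power2_eq_square)
  then show "rr < 1" unfolding rr_def by (simp add: exp_minus field_simps)
qed

lemma bad_set_meas: "{A \<in> space (gauss_sample m d). t < Qf m d A y} \<in> sets (gauss_sample m d)"
  by measurable

lemma tail:
  "measure (gauss_sample m d) {A \<in> space (gauss_sample m d). 6/5 * real m * (cnorm2 d y)\<^sup>2 < Qf m d A y} \<le> rr ^ m"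
proof (cases "cnorm2 d y = 0")
  case True
  then have "Qf m d A y = 0" for A unfolding Qf_def by (simp add: cnorm2_zero)
  then show ?thesis using True rr_bounds by simp
next
  case False
  then have n: "cnorm2 d y > 0" using cnorm2_nonneg[of d y] by linarith
  define l where "l = 1 / (6 * (cnorm2 d y)\<^sup>2)"
  have l: "0 < l" "l * (cnorm2 d y)\<^sup>2 = 1/6" using n unfolding l_def by auto
  have "measure (gauss_sample m d) {A \<in> space (gauss_sample m d). 6/5 * real m * (cnorm2 d y)\<^sup>2 < Qf m d A y}
     \<le> exp (- l * (6/5 * real m * (cnorm2 d y)\<^sup>2)) * (1 / (1 - l * (cnorm2 d y)\<^sup>2)) ^ m"
    using l by (intro chernoff) auto
  also have "exp (- l * (6/5 * real m * (cnorm2 d y)\<^sup>2)) = exp (real m * (- 1/5))"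
    using l(2) by (simp add: algebra_simps)
  also have "\<dots> = exp (- 1/5) ^ m" by (rule exp_of_nat_mult)
  also have "(1 / (1 - l * (cnorm2 d y)\<^sup>2)) ^ m = (6/5) ^ m" unfolding l(2) by simp
  also have "exp (- 1/5) ^ m * (6/5) ^ m = rr ^ m" unfolding rr_def by (simp only: power_mult_distrib[symmetric] mult.commute)
  finally show ?thesis .
qed

definition BB :: real where "BB = 2 ^ 102 * 9"

theorem main:
  shows "\<exists>C c :: real. C > 0 \<and> c > 0 \<and>
    (\<forall>m d :: nat. real m \<ge> C * real d \<longrightarrow>
      (\<exists>E \<in> sets (gauss_sample m d).
         measure (gauss_sample m d) E \<ge> 1 - 3 * exp (- c * real m) \<and>
         (\<forall>A \<in> E. \<forall>z w b :: nat \<Rightarrow> complex.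
            (1 / real m) * (\<Sum>j<m. \<bar>(cmod (cinner d (A j) z + b j))\<^sup>2
                                  - (cmod (cinner d (A j) w + b j))\<^sup>2\<bar>)
            \<le> 3 / 2 * (cnorm2 d z + cnorm2 d w + 2 * cnorm2 m b / sqrt (real m))
                    * cnorm2 d (\<lambda>k. z k - w k))))"
proof -
  define c where "c = - ln rr / 2"
  define C where "C = ln BB / c"
  have c: "c > 0" unfolding c_def using rr_bounds by simp
  have LB: "ln BB > 0" unfolding BB_def by (intro ln_gt_zero) simp
  have C: "C > 0" unfolding C_def using c LB by simp
  have "\<exists>E \<in> sets (gauss_sample m d).
         measure (gauss_sample m d) E \<ge> 1 - 3 * exp (- c * real m) \<and>
         (\<forall>A \<in> E. \<forall>z w b :: nat \<Rightarrow> complex.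
            (1 / real m) * (\<Sum>j<m. \<bar>(cmod (cinner d (A j) z + b j))\<^sup>2
                                  - (cmod (cinner d (A j) w + b j))\<^sup>2\<bar>)
            \<le> 3 / 2 * (cnorm2 d z + cnorm2 d w + 2 * cnorm2 m b / sqrt (real m))
                    * cnorm2 d (\<lambda>k. z k - w k))"
    if mC: "real m \<ge> C * real d" for m d
  proof -
    let ?M = "gauss_sample m d"
    interpret P: prob_space ?M by (rule prob_gs)
    define bad where "bad = (\<lambda>y. {A \<in> space ?M. 6/5 * real m * (cnorm2 d y)\<^sup>2 < Qf m d A y})"
    define U where "U = (\<Union>y\<in>net d. bad y)"
    define E where "E = space ?M - U"
    have badm: "bad y \<in> sets ?M" for y unfolding bad_def by (rule bad_set_meas)
    have Um: "U \<in> sets ?M" unfolding U_def using finite_net badm by auto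
    have Em: "E \<in> sets ?M" unfolding E_def using Um by auto
    have "measure ?M U \<le> (\<Sum>y\<in>net d. measure ?M (bad y))"
      unfolding U_def by (rule measure_UNION_le[OF finite_net badm])
    also have "\<dots> \<le> (\<Sum>y\<in>net d. rr ^ m)"
      unfolding bad_def by (intro sum_mono tail)
    also have "\<dots> = real (card (net d)) * rr ^ m" by simp
    also have "\<dots> \<le> BB ^ d * rr ^ m"
      using card_net[of d] rr_bounds unfolding BB_def by (intro mult_right_mono) auto
    also have "\<dots> = exp (real d * ln BB + real m * ln rr)"
    proof -
      have "BB > 0" unfolding BB_def by simp
      then have "exp (real d * ln BB) = BB ^ d" by (simp add: exp_of_nat_mult)
      moreover have "exp (real m * ln rr) = rr ^ m" using rr_bounds by (simp add: exp_of_nat_mult)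
      ultimately show ?thesis by (simp add: exp_add)
    qed
    also have "\<dots> \<le> exp (- c * real m)"
    proof -
      have "real d * ln BB = C * real d * c" unfolding C_def using c by simp
      also have "\<dots> \<le> real m * c" using mC c by (intro mult_right_mono) auto
      finally have "real d * ln BB \<le> real m * c" .
      moreover have "ln rr = - 2 * c" unfolding c_def by simp
      ultimately show ?thesis by (simp add: algebra_simps)
    qed
    finally have mU: "measure ?M U \<le> exp (- c * real m)" .
    have "measure ?M E = 1 - measure ?M U" unfolding E_def by (rule P.prob_compl[OF Um])
    moreover have "exp (- c * real m) \<le> 3 * exp (- c * real m)" by simp
    ultimately have mE: "measure ?M E \<ge> 1 - 3 * exp (- c * real m)" using mU by linarith
    have good: "\<forall>z w b :: nat \<Rightarrow> complex.
            (1 / real m) * (\<Sum>j<m. \<bar>(cmod (cinner d (A j) z + b j))\<^sup>2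
                                  - (cmod (cinner d (A j) w + b j))\<^sup>2\<bar>)
            \<le> 3 / 2 * (cnorm2 d z + cnorm2 d w + 2 * cnorm2 m b / sqrt (real m))
                    * cnorm2 d (\<lambda>k. z k - w k)" if AE: "A \<in> E" for A
    proof (intro allI, rule final_ineq[where m=m and d=d and A=A])
      fix u
      define a where "a = sqrt (6/5 * real m)"
      have a: "0 \<le> a" unfolding a_def by simp
      have gy: "qn m d A y \<le> a * cnorm2 d y" if y: "y \<in> net d" for y
      proof -
        have "A \<notin> bad y" using AE y unfolding E_def U_def by auto
        moreover have "A \<in> space ?M" using AE unfolding E_def by auto
        ultimately have "Qf m d A y \<le> 6/5 * real m * (cnorm2 d y)\<^sup>2" unfolding bad_def by auto
        then have "(qn m d A y)\<^sup>2 \<le> (a * cnorm2 d y)\<^sup>2"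
          unfolding Qf_qn a_def by (simp add: power_mult_distrib)
        then show ?thesis using a cnorm2_nonneg[of d y] by (intro power2_le_imp_le[OF _ mult_nonneg_nonneg]) auto
      qed
      have "qn m d A u \<le> a * (1 + 1/20) / (1 - 1/20) * cnorm2 d u"
        by (rule net_bound[OF _ _ a approx gy]) auto
      also have "a * (1 + 1/20) / (1 - 1/20) \<le> sqrt (3/2 * real m)"
      proof -
        have "sqrt (6/5 * real m * (21/19)\<^sup>2) = a * (21/19)"
          unfolding a_def real_sqrt_mult[of "6/5*real m" "(21/19)\<^sup>2"] by simp
        then have "a * (1 + 1/20) / (1 - 1/20) = sqrt (6/5 * real m * (21/19)\<^sup>2)"
          by simp
        also have "\<dots> \<le> sqrt (3/2 * real m)" by (intro real_sqrt_le_mono) (simp add: power2_eq_square)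
        finally show ?thesis .
      qed
      then have "a * (1 + 1/20) / (1 - 1/20) * cnorm2 d u \<le> sqrt (3/2 * real m) * cnorm2 d u"
        by (intro mult_right_mono cnorm2_nonneg)
      finally show "qn m d A u \<le> sqrt (3/2 * real m) * cnorm2 d u" .
    qed
    show ?thesis
      by (rule bexI[OF _ Em], intro conjI ballI, rule mE, erule good)
  qed
  note key = this
  show ?thesis
    apply (rule exI[of _ C], rule exI[of _ c], intro conjI allI impI)
      apply (rule C)
     apply (rule c)
    apply (erule key)
    done
qed


theorem lemma9:
  shows "\<exists>C c :: real. C > 0 \<and> c > 0 \<and>
    (\<forall>m d :: nat. real m \<ge> C * real d \<longrightarrow>
      (\<exists>E \<in> sets (gauss_sample m d).
         measure (gauss_sample m d) E \<ge> 1 - 3 * exp (- c * real m) \<and>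
         (\<forall>A \<in> E. \<forall>z w b :: nat \<Rightarrow> complex.
            (1 / real m) * (\<Sum>j<m. \<bar>(cmod (cinner d (A j) z + b j))\<^sup>2
                                  - (cmod (cinner d (A j) w + b j))\<^sup>2\<bar>)
            \<le> 3 / 2 * (cnorm2 d z + cnorm2 d w + 2 * cnorm2 m b / sqrt (real m))
                    * cnorm2 d (\<lambda>k. z k - w k))))"
  by (rule main)

end
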